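(* Let $\Gamma$ be a finite, compact, connected, bipartite metric graph with first Betti number $\beta$, and let $B\subset\partial\Gamma$ be nonempty. Then $$\dim\ker L^{\rm st,D}(\Gamma,B)=0\qquad\text{and}\qquad\dim\ker L^{\rm a/st,N}(\Gamma,B)=\beta+|B|-1.$$
   Context: A finite compact metric graph $\Gamma$ consists of finitely many edges $e_n=[x_{2n-1},x_{2n}]\subset\mathbb R$, $n=1,\dots,E$, of positive lengths and a vertex set $\mathcal V=\{v_1,\dots,v_V\}$ which is a partition of the set of all edge endpoints; the degree of a vertex is the number of endpoints it contains (loops count twice); $\partial\Gamma$ is the set of vertices of degree one; $\beta=E-V+1$. $\Gamma$ is bipartite if $\mathcal V=\mathcal V_1\sqcup\mathcal V_2$ with every edge having one endpoint in a vertex of $\mathcal V_1$ and the other in a vertex of $\mathcal V_2$. $f(x_j)$ denotes the limit of $f$ at endpoint $x_j$, and $\partial f(x_j)=f'(x_j)$ if $x_j$ is a left endpoint, $-f'(x_j)$ if a right endpoint. $L^{\rm st,D}(\Gamma,B)$ acts as $-f''$ on each edge with domain all $f\in W^2_2(\Gamma\setminus\mathcal V)=\bigoplus_nW^2_2(e_n)$ satisfying $f=0$ at each vertex of $B$ and standard conditions ($f(x_i)=f(x_j)$ for $x_i,x_j\in v$, $\sum_{x_j\in v}\partial f(x_j)=0$) at all other vertices $v$. $L^{\rm a/st,N}(\Gamma,B)$ acts as $-f''$ with domain all $f\in W^2_2(\Gamma\setminus\mathcal V)$ satisfying $\partial f=0$ at each vertex of $B$ and anti-standard conditions ($\sum_{x_j\in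 v}f(x_j)=0$, $\partial f(x_i)=\partial f(x_j)$ for $x_i,x_j\in v$) at all other vertices $v$. *)

theory Defs
  imports "HOL-Analysis.Analysis"
begin

text \<open>
  Edges are indexed by n < E; edge n is the interval [a n, b n] with a n < b n.
  Endpoints are indexed by j < 2*E: endpoint 2n is the left endpoint a n of edge n,
  endpoint 2n+1 is the right endpoint b n of edge n.
  The vertex set V is a partition of the endpoint index set {0..<2*E}.
  A function on the graph is f :: nat => real => real, where f n is its restriction
  to edge n; we normalise f n x = 0 off the edge and f n = 0 for n >= E.
\<close>

definition is_metric_graph :: "nat \<Rightarrow> (nat \<Rightarrow> real) \<Rightarrow> (nat \<Rightarrow> real) \<Rightarrow> nat set set \<Rightarrow> bool" where
  "is_metric_graph E a b V \<longleftrightarrow>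
     (\<forall>n<E. a n < b n) \<and>
     (\<forall>v\<in>V. v \<noteq> {}) \<and>
     (\<forall>v\<in>V. \<forall>w\<in>V. v \<noteq> w \<longrightarrow> v \<inter> w = {}) \<and>
     \<Union>V = {0..<2*E}"

definition vadj :: "nat \<Rightarrow> nat set set \<Rightarrow> (nat set \<times> nat set) set" where
  "vadj E V = {(u, w). u \<in> V \<and> w \<in> V \<and>
      (\<exists>n<E. (2*n \<in> u \<and> 2*n+1 \<in> w) \<or> (2*n+1 \<in> u \<and> 2*n \<in> w))}"

definition connected_graph :: "nat \<Rightarrow> nat set set \<Rightarrow> bool" where
  "connected_graph E V \<longleftrightarrow> (\<forall>u\<in>V. \<forall>w\<in>V. (u, w) \<in> (vadj E V)\<^sup>*)"

definition bipartite_graph :: "nat \<Rightarrow> nat set set \<Rightarrow> bool" where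
  "bipartite_graph E V \<longleftrightarrow> (\<exists>V1 V2. V1 \<union> V2 = V \<and> V1 \<inter> V2 = {} \<and>
     (\<forall>n<E. \<forall>u\<in>V. \<forall>w\<in>V. 2*n \<in> u \<longrightarrow> 2*n+1 \<in> w \<longrightarrow>
         ((u \<in> V1 \<and> w \<in> V2) \<or> (u \<in> V2 \<and> w \<in> V1))))"

text \<open>Degree of a vertex = number of endpoints it contains; boundary = degree-one vertices.\<close>
definition graph_boundary :: "nat set set \<Rightarrow> nat set set" where
  "graph_boundary V = {v \<in> V. card v = 1}"

definition betti :: "nat \<Rightarrow> nat set set \<Rightarrow> int" where
  "betti E V = int E - int (card V) + 1"

text \<open>Value f(x_j) and normal derivative \<partial>f(x_j) at endpoint j
  (one-sided limits, realised as one-sided derivatives/values on the closed edge).\<close>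
definition endval :: "(nat \<Rightarrow> real) \<Rightarrow> (nat \<Rightarrow> real) \<Rightarrow> (nat \<Rightarrow> real \<Rightarrow> real) \<Rightarrow> nat \<Rightarrow> real" where
  "endval a b f j = (if even j then f (j div 2) (a (j div 2)) else f (j div 2) (b (j div 2)))"

definition endder :: "(nat \<Rightarrow> real) \<Rightarrow> (nat \<Rightarrow> real) \<Rightarrow> (nat \<Rightarrow> real \<Rightarrow> real) \<Rightarrow> nat \<Rightarrow> real" where
  "endder a b f j = (let n = j div 2 in
     if even j then vector_derivative (f n) (at (a n) within {a n..b n})
     else - vector_derivative (f n) (at (b n) within {a n..b n}))"

text \<open>Functions in the (classical) domain that are annihilated by -d^2/dx^2 on every edge:
  f n is C^1 on the closed edge (one-sided derivatives at endpoints),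
  its derivative is differentiable with -f'' = 0 on the edge.\<close>
definition edge_harmonic :: "nat \<Rightarrow> (nat \<Rightarrow> real) \<Rightarrow> (nat \<Rightarrow> real) \<Rightarrow> (nat \<Rightarrow> real \<Rightarrow> real) \<Rightarrow> bool" where
  "edge_harmonic E a b f \<longleftrightarrow>
     (\<forall>n. n \<ge> E \<longrightarrow> (\<forall>x. f n x = 0)) \<and>
     (\<forall>n<E. \<forall>x. x \<notin> {a n..b n} \<longrightarrow> f n x = 0) \<and>
     (\<forall>n<E. \<exists>g'. (\<forall>x\<in>{a n..b n}. (f n has_real_derivative g' x) (at x within {a n..b n})) \<and>
                 (\<forall>x\<in>{a n..b n}. (g' has_real_derivative 0) (at x within {a n..b n})))"

definition ker_stD :: "nat \<Rightarrow> (nat \<Rightarrow> real) \<Rightarrow> (nat \<Rightarrow> real) \<Rightarrow> nat set set \<Rightarrow> nat set set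
    \<Rightarrow> (nat \<Rightarrow> real \<Rightarrow> real) set" where
  "ker_stD E a b V B = {f. edge_harmonic E a b f \<and>
     (\<forall>v\<in>B. \<forall>j\<in>v. endval a b f j = 0) \<and>
     (\<forall>v\<in>V - B. (\<forall>i\<in>v. \<forall>j\<in>v. endval a b f i = endval a b f j) \<and>
                 (\<Sum>j\<in>v. endder a b f j) = 0)}"

definition ker_astN :: "nat \<Rightarrow> (nat \<Rightarrow> real) \<Rightarrow> (nat \<Rightarrow> real) \<Rightarrow> nat set set \<Rightarrow> nat set set
    \<Rightarrow> (nat \<Rightarrow> real \<Rightarrow> real) set" where
  "ker_astN E a b V B = {f. edge_harmonic E a b f \<and>
     (\<forall>v\<in>B. \<forall>j\<in>v. endder a b f j = 0) \<and>
     (\<forall>v\<in>V - B. (\<Sum>j\<in>v. endval a b f j) = 0 \<and>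
                 (\<forall>i\<in>v. \<forall>j\<in>v. endder a b f i = endder a b f j))}"

definition has_dim :: "('i \<Rightarrow> real \<Rightarrow> real) set \<Rightarrow> nat \<Rightarrow> bool" where
  "has_dim S d \<longleftrightarrow> (\<exists>u :: nat \<Rightarrow> 'i \<Rightarrow> real \<Rightarrow> real.
      (\<forall>k<d. u k \<in> S) \<and>
      (\<forall>f\<in>S. \<exists>c :: nat \<Rightarrow> real. f = (\<lambda>n x. \<Sum>k<d. c k * u k n x)) \<and>
      (\<forall>c :: nat \<Rightarrow> real. (\<lambda>n x. \<Sum>k<d. c k * u k n x) = (\<lambda>n x. 0) \<longrightarrow> (\<forall>k<d. c k = 0)))"

end

theory Submission
  imports Defs
begin

definition Sol :: "nat set \<Rightarrow> 'p set \<Rightarrow> ('p \<Rightarrow> nat \<Rightarrow> real) \<Rightarrow> (nat \<Rightarrow> real) set" where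
  "Sol I P L = {x. (\<forall>i. i \<notin> I \<longrightarrow> x i = 0) \<and> (\<forall>p\<in>P. (\<Sum>i\<in>I. L p i * x i) = 0)}"

definition indepL :: "nat set \<Rightarrow> 'p set \<Rightarrow> ('p \<Rightarrow> nat \<Rightarrow> real) \<Rightarrow> bool" where
  "indepL I P L \<longleftrightarrow> (\<forall>\<psi>. (\<forall>i\<in>I. (\<Sum>p\<in>P. \<psi> p * L p i) = 0) \<longrightarrow> (\<forall>p\<in>P. \<psi> p = 0))"

definition vdim :: "(nat \<Rightarrow> real) set \<Rightarrow> nat \<Rightarrow> bool" where
  "vdim S d \<longleftrightarrow> (\<exists>u :: nat \<Rightarrow> nat \<Rightarrow> real.
      (\<forall>k<d. u k \<in> S) \<and>
      (\<forall>x\<in>S. \<exists>c :: nat \<Rightarrow> real. x = (\<lambda>i. \<Sum>k<d. c k * u k i)) \<and>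
      (\<forall>c :: nat \<Rightarrow> real. (\<lambda>i. \<Sum>k<d. c k * u k i) = (\<lambda>i. 0) \<longrightarrow> (\<forall>k<d. c k = 0)))"

lemma vdim_transport:
  assumes "vdim S' d"
    and "\<And>y. y \<in> S' \<Longrightarrow> \<phi> y \<in> S"
    and "\<And>x. x \<in> S \<Longrightarrow> \<exists>y\<in>S'. x = \<phi> y"
    and "\<And>c u. \<phi> (\<lambda>i. \<Sum>k<d. c k * u k i) = (\<lambda>i. \<Sum>k<d. c k * \<phi> (u k) i)"
    and "\<And>c u. (\<forall>k<d. u k \<in> S') \<Longrightarrow> (\<lambda>i. \<Sum>k<d. c k * u k i) \<in> S'"
    and "\<And>y. y \<in> S' \<Longrightarrow> \<phi> y = (\<lambda>i. 0) \<Longrightarrow> y = (\<lambda>i. 0)"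
  shows "vdim S d"
proof -
  obtain u where u1: "\<forall>k<d. u k \<in> S'"
    and u2: "\<forall>x\<in>S'. \<exists>c. x = (\<lambda>i. \<Sum>k<d. c k * u k i)"
    and u3: "\<forall>c. (\<lambda>i. \<Sum>k<d. c k * u k i) = (\<lambda>i. 0) \<longrightarrow> (\<forall>k<d. c k = 0)"
    using assms(1) unfolding vdim_def by blast
  show ?thesis unfolding vdim_def
  proof (intro exI[of _ "\<lambda>k. \<phi> (u k)"] conjI allI impI ballI)
    fix k assume "k < d" then show "\<phi> (u k) \<in> S" using u1 assms(2) by blast
  next
    fix x assume "x \<in> S"
    then obtain y where y: "y \<in> S'" "x = \<phi> y" using assms(3) by blast
    then obtain c where "y = (\<lambda>i. \<Sum>k<d. c k * u k i)" using u2 by blast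
    then show "\<exists>c. x = (\<lambda>i. \<Sum>k<d. c k * \<phi> (u k) i)" using y assms(4) by metis
  next
    fix c k assume h: "(\<lambda>i. \<Sum>k<d. c k * \<phi> (u k) i) = (\<lambda>i. 0)" and k: "k < d"
    have "\<phi> (\<lambda>i. \<Sum>k<d. c k * u k i) = (\<lambda>i. 0)" using h assms(4) by metis
    then have "(\<lambda>i. \<Sum>k<d. c k * u k i) = (\<lambda>i. 0)" using assms(5,6) u1 by blast
    then show "c k = 0" using u3 k by blast
  qed
qed

lemma Sol_comb:
  assumes "\<forall>k<d. u k \<in> Sol I P L"
  shows "(\<lambda>i. \<Sum>k<d. c k * u k i) \<in> Sol I P L"
proof -
  have "(\<Sum>i\<in>I. L p i * (\<Sum>k<d. c k * u k i)) = 0" if "p \<in> P" for p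
  proof -
    have "(\<Sum>i\<in>I. L p i * (\<Sum>k<d. c k * u k i)) = (\<Sum>k<d. c k * (\<Sum>i\<in>I. L p i * u k i))"
      by (simp add: sum_distrib_left sum_distrib_right sum.swap[of _ I] mult.assoc mult.left_commute)
    also have "\<dots> = 0" using assms that unfolding Sol_def by simp
    finally show ?thesis .
  qed
  moreover have "(\<Sum>k<d. c k * u k i) = 0" if "i \<notin> I" for i
    using assms that unfolding Sol_def by simp
  ultimately show ?thesis unfolding Sol_def by simp
qed

lemma vdim_base:
  assumes "finite I"
  shows "vdim {x. \<forall>i. i \<notin> I \<longrightarrow> x i = 0} (card I)"
proof -
  obtain h where h: "bij_betw h {0..<card I} I" using ex_bij_betw_nat_finite[OF assms] by blast
  define u where "u k = (\<lambda>i. if i = h k then (1::real) else 0)" for k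
  have hin: "h k \<in> I" if "k < card I" for k using h that unfolding bij_betw_def by auto
  have hinj: "h k = h k' \<longleftrightarrow> k = k'" if "k < card I" "k' < card I" for k k'
    using h that unfolding bij_betw_def inj_on_def by auto
  show ?thesis unfolding vdim_def
  proof (intro exI[of _ u] conjI allI impI ballI)
    fix k assume "k < card I" then show "u k \<in> {x. \<forall>i. i \<notin> I \<longrightarrow> x i = 0}"
      using hin unfolding u_def by auto
  next
    fix x :: "nat \<Rightarrow> real" assume x: "x \<in> {x. \<forall>i. i \<notin> I \<longrightarrow> x i = 0}"
    show "\<exists>c. x = (\<lambda>i. \<Sum>k<card I. c k * u k i)"
    proof (intro exI[of _ "\<lambda>k. x (h k)"] ext)
      fix i
      show "x i = (\<Sum>k<card I. x (h k) * u k i)"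
      proof (cases "i \<in> I")
        case True
        then obtain k0 where k0: "k0 < card I" "h k0 = i" using h unfolding bij_betw_def by (metis atLeastLessThan_iff imageE)
        have "(\<Sum>k<card I. x (h k) * u k i) = (\<Sum>k<card I. if k = k0 then x i else 0)"
          by (rule sum.cong) (use k0 hinj in \<open>auto simp: u_def\<close>)
        also have "\<dots> = x i" using k0 by simp
        finally show ?thesis by simp
      next
        case False
        then have "\<forall>k<card I. i \<noteq> h k" using hin by metis
        then show ?thesis using x False unfolding u_def by simp
      qed
    qed
  next
    fix c k assume hc: "(\<lambda>i. \<Sum>k<card I. c k * u k i) = (\<lambda>i. 0)" and k: "k < card I"
    have "(\<Sum>k'<card I. c k' * u k' (h k)) = 0" using fun_cong[OF hc, of "h k"] by simp
    moreover have "(\<Sum>k'<card I. c k' * u k' (h k)) = (\<Sum>k'<card I. if k' = k then c k else 0)"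
      by (rule sum.cong) (use k hinj in \<open>auto simp: u_def\<close>)
    ultimately show "c k = 0" using k by simp
  qed
qed

lemma Sol_empty: "Sol I {} L = {x. \<forall>i. i \<notin> I \<longrightarrow> x i = 0}"
  unfolding Sol_def by simp

lemma main_LA:
  assumes "finite P" "finite I" "indepL I P L"
  shows "card P \<le> card I \<and> vdim (Sol I P L) (card I - card P)"
  using assms
proof (induction P arbitrary: I L rule: finite_induct)
  case empty
  then show ?case using vdim_base[of I] by (simp add: Sol_empty)
next
  case (insert p P)
  have ind: "indepL I (insert p P) L" by fact
  have "\<exists>k\<in>I. L p k \<noteq> 0"
  proof (rule ccontr)
    assume "\<not> ?thesis"
    then have "\<forall>i\<in>I. (\<Sum>q\<in>insert p P. (\<lambda>q. if q = p then 1 else 0) q * L q i) = 0"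
    proof (intro ballI)
      fix i assume i: "i \<in> I" and nk: "\<not> (\<exists>k\<in>I. L p k \<noteq> 0)"
      have "(\<Sum>q\<in>P. (if q = p then (1::real) else 0) * L q i) = 0"
        using insert.hyps by (intro sum.neutral) auto
      then show "(\<Sum>q\<in>insert p P. (\<lambda>q. if q = p then 1 else 0) q * L q i) = 0"
        using insert.hyps i nk by simp
    qed
    then have "(\<lambda>q. if q = p then (1::real) else 0) p = 0"
      using ind[unfolded indepL_def, rule_format, of "\<lambda>q. if q = p then 1 else 0" p] by simp
    then show False by simp
  qed
  then obtain k where k: "k \<in> I" "L p k \<noteq> 0" by blast
  define I' where "I' = I - {k}"
  define L' where "L' q i = L q i - L q k / L p k * L p i" for q i
  have fI': "finite I'" using insert.prems unfolding I'_def by simp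
  have ind': "indepL I' P L'"
    unfolding indepL_def
  proof (intro allI impI ballI)
    fix \<psi> q assume h: "\<forall>i\<in>I'. (\<Sum>q\<in>P. \<psi> q * L' q i) = 0" and q: "q \<in> P"
    define \<psi>' where "\<psi>' = \<psi>(p := - (\<Sum>q\<in>P. \<psi> q * L q k) / L p k)"
    have eq: "(\<Sum>q\<in>insert p P. \<psi>' q * L q i) = (\<Sum>q\<in>P. \<psi> q * L' q i)" for i
    proof -
      have "(\<Sum>q\<in>insert p P. \<psi>' q * L q i) = \<psi>' p * L p i + (\<Sum>q\<in>P. \<psi>' q * L q i)"
        using insert.hyps by simp
      also have "(\<Sum>q\<in>P. \<psi>' q * L q i) = (\<Sum>q\<in>P. \<psi> q * L q i)"
        using insert.hyps unfolding \<psi>'_def by (intro sum.cong) auto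
      also have "(\<Sum>q\<in>P. \<psi> q * L' q i) = (\<Sum>q\<in>P. \<psi> q * L q i) - (\<Sum>q\<in>P. \<psi> q * L q k) / L p k * L p i"
      proof -
        have "(\<Sum>q\<in>P. \<psi> q * L' q i) = (\<Sum>q\<in>P. \<psi> q * L q i - (\<psi> q * L q k) * (L p i / L p k))"
          by (rule sum.cong) (simp_all add: L'_def algebra_simps)
        also have "\<dots> = (\<Sum>q\<in>P. \<psi> q * L q i) - (\<Sum>q\<in>P. \<psi> q * L q k) * (L p i / L p k)"
          by (simp add: sum_subtractf sum_distrib_right sum_divide_distrib)
        finally show ?thesis by simp
      qed
      ultimately show ?thesis unfolding \<psi>'_def by simp
    qed
    have "\<forall>i\<in>I. (\<Sum>q\<in>insert p P. \<psi>' q * L q i) = 0"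
    proof
      fix i assume i: "i \<in> I"
      show "(\<Sum>q\<in>insert p P. \<psi>' q * L q i) = 0"
      proof (cases "i = k")
        case True
        have "(\<Sum>q\<in>insert p P. \<psi>' q * L q i) = \<psi>' p * L p k + (\<Sum>q\<in>P. \<psi>' q * L q k)"
          using insert.hyps True by simp
        also have "(\<Sum>q\<in>P. \<psi>' q * L q k) = (\<Sum>q\<in>P. \<psi> q * L q k)"
          using insert.hyps unfolding \<psi>'_def by (intro sum.cong) auto
        finally show ?thesis using k unfolding \<psi>'_def by simp
      next
        case False
        then show ?thesis using eq h i unfolding I'_def by simp
      qed
    qed
    then have "\<psi>' q = 0" using ind q unfolding indepL_def by blast
    then show "\<psi> q = 0" using q insert.hyps unfolding \<psi>'_def by (auto split: if_splits)
  qed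
  from insert.IH[OF fI' ind'] have IH: "card P \<le> card I'" "vdim (Sol I' P L') (card I' - card P)"
    by auto
  have cI': "card I' = card I - 1" unfolding I'_def using k insert.prems by simp
  have cI: "card I \<ge> 1" using k insert.prems by (metis One_nat_def Suc_leI card_gt_0_iff empty_iff)
  have card_eq: "card (insert p P) = card P + 1" using insert.hyps by simp
  have dd: "card I - card (insert p P) = card I' - card P" using cI' card_eq by simp
  define lf where "lf y = - (\<Sum>i\<in>I'. L p i * y i) / L p k" for y :: "nat \<Rightarrow> real"
  define \<phi> where "\<phi> y = y(k := lf y)" for y :: "nat \<Rightarrow> real"
  have kI': "k \<notin> I'" unfolding I'_def by simp
  have sumI: "(\<Sum>i\<in>I. g i) = g k + (\<Sum>i\<in>I'. g i)" for g :: "nat \<Rightarrow> real"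
    unfolding I'_def using k insert.prems by (simp add: sum.remove)
  have phi_in: "\<phi> y \<in> Sol I (insert p P) L" if y: "y \<in> Sol I' P L'" for y
  proof -
    have supp: "\<forall>i. i \<notin> I \<longrightarrow> \<phi> y i = 0" using y k unfolding Sol_def \<phi>_def I'_def by auto
    have phik: "\<phi> y k = lf y" unfolding \<phi>_def by simp
    have phio: "\<phi> y i = y i" if "i \<in> I'" for i using that kI' unfolding \<phi>_def by auto
    have c1: "(\<Sum>i\<in>I. L p i * \<phi> y i) = 0"
      unfolding sumI phik using k by (simp add: phio lf_def)
    have c2: "(\<Sum>i\<in>I. L q i * \<phi> y i) = 0" if q: "q \<in> P" for q
    proof -
      have "0 = (\<Sum>i\<in>I'. L' q i * y i)" using y q unfolding Sol_def by simp
      also have "\<dots> = (\<Sum>i\<in>I'. L q i * y i - (L q k / L p k) * (L p i * y i))"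
        by (rule sum.cong) (simp_all add: L'_def algebra_simps)
      also have "\<dots> = (\<Sum>i\<in>I'. L q i * y i) - L q k / L p k * (\<Sum>i\<in>I'. L p i * y i)"
        by (simp add: sum_subtractf sum_distrib_left)
      also have "\<dots> = (\<Sum>i\<in>I'. L q i * y i) + L q k * lf y"
        unfolding lf_def by simp
      also have "\<dots> = (\<Sum>i\<in>I. L q i * \<phi> y i)"
        unfolding sumI phik by (simp add: phio)
      finally show ?thesis by simp
    qed
    show ?thesis using supp c1 c2 unfolding Sol_def by auto
  qed
  have phi_onto: "\<exists>y\<in>Sol I' P L'. x = \<phi> y" if x: "x \<in> Sol I (insert p P) L" for x
  proof (intro bexI[of _ "x(k := 0)"])
    have xp: "L p k * x k + (\<Sum>i\<in>I'. L p i * x i) = 0" using x unfolding Sol_def sumI by simp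
    have xk: "x k = lf x" unfolding lf_def using xp k by (simp add: field_simps)
    have lx: "lf (x(k := 0)) = lf x" unfolding lf_def using kI'
      by (intro arg_cong[where f="\<lambda>s. - s / L p k"] sum.cong) auto
    show "x = \<phi> (x(k := 0))" unfolding \<phi>_def lx using xk by auto
    have supp: "\<forall>i. i \<notin> I' \<longrightarrow> (x(k := 0)) i = 0" using x unfolding Sol_def I'_def by auto
    have c: "(\<Sum>i\<in>I'. L' q i * (x(k := 0)) i) = 0" if q: "q \<in> P" for q
    proof -
      have "(\<Sum>i\<in>I'. L' q i * (x(k := 0)) i) = (\<Sum>i\<in>I'. L' q i * x i)"
        using kI' by (intro sum.cong) auto
      also have "\<dots> = (\<Sum>i\<in>I'. L q i * x i - (L q k / L p k) * (L p i * x i))"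
        by (rule sum.cong) (simp_all add: L'_def algebra_simps)
      also have "\<dots> = (\<Sum>i\<in>I'. L q i * x i) - L q k / L p k * (\<Sum>i\<in>I'. L p i * x i)"
        by (simp add: sum_subtractf sum_distrib_left)
      also have "\<dots> = (\<Sum>i\<in>I'. L q i * x i) + L q k * x k"
        using xk unfolding lf_def by simp
      also have "\<dots> = (\<Sum>i\<in>I. L q i * x i)" unfolding sumI by simp
      also have "\<dots> = 0" using x q unfolding Sol_def by simp
      finally show ?thesis .
    qed
    show "x(k := 0) \<in> Sol I' P L'" using supp c unfolding Sol_def by auto
  qed
  have phi_lin: "\<phi> (\<lambda>i. \<Sum>j<d. c j * u j i) = (\<lambda>i. \<Sum>j<d. c j * \<phi> (u j) i)" for d c u
  proof -
    have s1: "(\<Sum>i\<in>I'. L p i * (\<Sum>j<d. c j * u j i)) = (\<Sum>j<d. c j * (\<Sum>i\<in>I'. L p i * u j i))"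
      by (simp add: sum_distrib_left sum_distrib_right sum.swap[of _ I'] mult.assoc mult.left_commute)
    have s2: "(\<Sum>j<d. c j * lf (u j)) = (\<Sum>j<d. - (c j * (\<Sum>i\<in>I'. L p i * u j i)) / L p k)"
      by (rule sum.cong) (simp_all add: lf_def)
    have "lf (\<lambda>i. \<Sum>j<d. c j * u j i) = (\<Sum>j<d. c j * lf (u j))"
      unfolding s2 unfolding lf_def s1 by (simp add: sum_divide_distrib sum_negf)
    then show ?thesis unfolding \<phi>_def by auto
  qed
  have phi_inj: "y = (\<lambda>i. 0)" if "y \<in> Sol I' P L'" "\<phi> y = (\<lambda>i. 0)" for y
  proof
    fix i show "y i = 0"
    proof (cases "i = k")
      case True then show ?thesis using that(1) kI' unfolding Sol_def by auto
    next
      case False then show ?thesis using fun_cong[OF that(2), of i] unfolding \<phi>_def by simp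
    qed
  qed
  have "vdim (Sol I (insert p P) L) (card I' - card P)"
    by (rule vdim_transport[OF IH(2), of \<phi>]) (fact phi_in, fact phi_onto, fact phi_lin, fact Sol_comb, fact phi_inj)
  moreover have "card (insert p P) \<le> card I" using IH(1) cI' card_eq cI by linarith
  ultimately show ?case using dd by simp
qed


lemma edge_linear:
  fixes g g' :: "real \<Rightarrow> real"
  assumes ab: "a < b"
    and d1: "\<forall>x\<in>{a..b}. (g has_real_derivative g' x) (at x within {a..b})"
    and d2: "\<forall>x\<in>{a..b}. (g' has_real_derivative 0) (at x within {a..b})"
  shows "\<exists>s. (\<forall>x\<in>{a..b}. g x = g a + s * (x - a)) \<and>
             vector_derivative g (at a within {a..b}) = s \<and>
             vector_derivative g (at b within {a..b}) = s"
proof -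
  have z: "((*) (0::real)) = (\<lambda>h. 0)" by (rule ext) simp
  have "\<exists>c. \<forall>x\<in>{a..b}. g' x = c"
  proof (rule has_derivative_zero_constant)
    fix x assume "x \<in> {a..b}"
    then have "(g' has_derivative (*) 0) (at x within {a..b})"
      using d2 unfolding has_field_derivative_def by blast
    then show "(g' has_derivative (\<lambda>h. 0)) (at x within {a..b})" unfolding z .
  qed simp
  then obtain s where s: "\<forall>x\<in>{a..b}. g' x = s" by blast
  have dg: "(g has_real_derivative s) (at x within {a..b})" if "x \<in> {a..b}" for x
    using d1 s that by metis
  have "\<exists>c. \<forall>x\<in>{a..b}. g x - s * x = c"
  proof (rule has_derivative_zero_constant)
    fix x assume x: "x \<in> {a..b}"
    have "((\<lambda>x. g x - s * x) has_real_derivative s - s * 1) (at x within {a..b})"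
      using DERIV_diff[OF dg[OF x] DERIV_cmult[OF DERIV_ident, of s]] by simp
    then have "((\<lambda>x. g x - s * x) has_derivative (*) 0) (at x within {a..b})"
      by (simp add: has_field_derivative_def)
    then show "((\<lambda>x. g x - s * x) has_derivative (\<lambda>h. 0)) (at x within {a..b})" unfolding z .
  qed simp
  then obtain c where c: "\<forall>x\<in>{a..b}. g x - s * x = c" by blast
  have lin: "\<forall>x\<in>{a..b}. g x = g a + s * (x - a)"
  proof
    fix x assume x: "x \<in> {a..b}"
    have "g x - s * x = c" "g a - s * a = c" using c x ab by auto
    then show "g x = g a + s * (x - a)" by (simp add: algebra_simps)
  qed
  have va: "vector_derivative g (at a within {a..b}) = s"
    using ab dg[of a] by (intro vector_derivative_within_closed_interval)
      (auto simp: has_real_derivative_iff_has_vector_derivative)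
  have vb: "vector_derivative g (at b within {a..b}) = s"
    using ab dg[of b] by (intro vector_derivative_within_closed_interval)
      (auto simp: has_real_derivative_iff_has_vector_derivative)
  show ?thesis using lin va vb by blast
qed

lemma const_edge_deriv:
  fixes c a b :: real
  assumes "a < b" "x \<in> {a..b}"
  shows "((\<lambda>x. if x \<in> {a..b} then c else 0) has_real_derivative 0) (at x within {a..b})"
proof -
  have "((\<lambda>x. c) has_real_derivative 0) (at x within {a..b})" by simp
  then show ?thesis
    by (rule has_field_derivative_transform_within[where d=1]) (use assms in auto)
qed

lemma sum_pairs: "(\<Sum>j<2*E. g j) = (\<Sum>n<E. g (2*n) + g (2*n+1))" for E :: nat and g :: "nat \<Rightarrow> real"
proof (induction E)
  case 0 then show ?case by simp
next
  case (Suc E)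
  have e: "2 * Suc E = Suc (Suc (2*E))" by simp
  show ?case unfolding e using Suc.IH by simp
qed

lemma mg_facts:
  assumes "is_metric_graph E a b V"
  shows mg_fin: "finite V"
    and mg_sub: "\<And>v. v \<in> V \<Longrightarrow> v \<subseteq> {..<2*E}"
    and mg_ex: "\<And>j. j < 2*E \<Longrightarrow> \<exists>v\<in>V. j \<in> v"
    and mg_uniq: "\<And>v w j. v \<in> V \<Longrightarrow> w \<in> V \<Longrightarrow> j \<in> v \<Longrightarrow> j \<in> w \<Longrightarrow> v = w"
    and mg_vfin: "\<And>v. v \<in> V \<Longrightarrow> finite v"
    and mg_ne: "\<And>v. v \<in> V \<Longrightarrow> v \<noteq> {}"
    and mg_ab: "\<And>n. n < E \<Longrightarrow> a n < b n"
proof -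
  note D = assms[unfolded is_metric_graph_def]
  have U: "\<Union>V = {0..<2*E}" using D[THEN conjunct2, THEN conjunct2, THEN conjunct2] .
  have dis: "\<forall>v\<in>V. \<forall>w\<in>V. v \<noteq> w \<longrightarrow> v \<inter> w = {}"
    using D[THEN conjunct2, THEN conjunct2, THEN conjunct1] .
  have ne: "\<forall>v\<in>V. v \<noteq> {}" using D[THEN conjunct2, THEN conjunct1] .
  have ab: "\<forall>n<E. a n < b n" using D[THEN conjunct1] .
  show sub: "\<And>v. v \<in> V \<Longrightarrow> v \<subseteq> {..<2*E}" using U by auto
  have "V \<subseteq> Pow {..<2*E}" using sub by auto
  then show "finite V" by (rule finite_subset) simp
  show "\<And>j. j < 2*E \<Longrightarrow> \<exists>v\<in>V. j \<in> v" using U by auto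
  show "\<And>v w j. v \<in> V \<Longrightarrow> w \<in> V \<Longrightarrow> j \<in> v \<Longrightarrow> j \<in> w \<Longrightarrow> v = w"
    using dis by blast
  show "\<And>v. v \<in> V \<Longrightarrow> finite v" using sub by (meson finite_lessThan finite_subset)
  show "\<And>v. v \<in> V \<Longrightarrow> v \<noteq> {}" using ne by blast
  show "\<And>n. n < E \<Longrightarrow> a n < b n" using ab by blast
qed

lemma propagate:
  assumes conn: "connected_graph E V" and v0: "v0 \<in> V" "\<phi> v0 = (0::real)"
    and edge: "\<And>n u w. n < E \<Longrightarrow> u \<in> V \<Longrightarrow> w \<in> V \<Longrightarrow> 2*n \<in> u \<Longrightarrow> 2*n+1 \<in> w \<Longrightarrow>
                 (\<phi> u = 0 \<longleftrightarrow> \<phi> w = 0)"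
  shows "\<forall>v\<in>V. \<phi> v = 0"
proof
  fix v assume v: "v \<in> V"
  have "(v0, v) \<in> (vadj E V)\<^sup>*" using conn v0 v unfolding connected_graph_def by blast
  then show "\<phi> v = 0"
  proof (induction rule: rtrancl_induct)
    case base then show ?case using v0 by simp
  next
    case (step y z)
    from step.hyps(2) obtain n where n: "y \<in> V" "z \<in> V" "n < E"
      "(2*n \<in> y \<and> 2*n+1 \<in> z) \<or> (2*n+1 \<in> y \<and> 2*n \<in> z)"
      unfolding vadj_def by blast
    then show ?case using edge[of n y z] edge[of n z y] step.IH by blast
  qed
qed

lemma harmonic_data:
  assumes mg: "is_metric_graph E a b V" and h: "edge_harmonic E a b f"
  shows "\<exists>\<alpha> s. \<forall>n<E. (\<forall>x\<in>{a n..b n}. f n x = \<alpha> n + s n * (x - a n)) \<and>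
      endder a b f (2*n) = s n \<and> endder a b f (2*n+1) = - s n \<and>
      endval a b f (2*n) = \<alpha> n \<and> endval a b f (2*n+1) = \<alpha> n + s n * (b n - a n)"
proof -
  have "\<forall>n\<in>{..<E}. \<exists>s. (\<forall>x\<in>{a n..b n}. f n x = f n (a n) + s * (x - a n)) \<and>
             vector_derivative (f n) (at (a n) within {a n..b n}) = s \<and>
             vector_derivative (f n) (at (b n) within {a n..b n}) = s"
  proof
    fix n assume "n \<in> {..<E}"
    then have n: "n < E" by simp
    obtain g' where g': "\<forall>x\<in>{a n..b n}. (f n has_real_derivative g' x) (at x within {a n..b n})"
      "\<forall>x\<in>{a n..b n}. (g' has_real_derivative 0) (at x within {a n..b n})"
      using h n unfolding edge_harmonic_def by blast
    show "\<exists>s. (\<forall>x\<in>{a n..b n}. f n x = f n (a n) + s * (x - a n)) \<and>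
             vector_derivative (f n) (at (a n) within {a n..b n}) = s \<and>
             vector_derivative (f n) (at (b n) within {a n..b n}) = s"
      by (rule edge_linear[OF mg_ab[OF mg n] g'])
  qed
  then obtain s where s: "\<forall>n\<in>{..<E}. (\<forall>x\<in>{a n..b n}. f n x = f n (a n) + s n * (x - a n)) \<and>
             vector_derivative (f n) (at (a n) within {a n..b n}) = s n \<and>
             vector_derivative (f n) (at (b n) within {a n..b n}) = s n"
    by (rule bchoice[elim_format]) blast
  have "\<forall>n<E. (\<forall>x\<in>{a n..b n}. f n x = f n (a n) + s n * (x - a n)) \<and>
      endder a b f (2*n) = s n \<and> endder a b f (2*n+1) = - s n \<and>
      endval a b f (2*n) = f n (a n) \<and> endval a b f (2*n+1) = f n (a n) + s n * (b n - a n)"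
  proof (intro allI impI conjI)
    fix n assume n: "n < E"
    have ab: "a n < b n" using mg_ab[OF mg n] .
    have sn: "(\<forall>x\<in>{a n..b n}. f n x = f n (a n) + s n * (x - a n)) \<and>
             vector_derivative (f n) (at (a n) within {a n..b n}) = s n \<and>
             vector_derivative (f n) (at (b n) within {a n..b n}) = s n" using s n by blast
    show "\<forall>x\<in>{a n..b n}. f n x = f n (a n) + s n * (x - a n)" using sn by blast
    show "endder a b f (2*n) = s n" using sn unfolding endder_def by (simp add: Let_def)
    show "endder a b f (2*n+1) = - s n" using sn unfolding endder_def by (simp add: Let_def)
    show "endval a b f (2*n) = f n (a n)" unfolding endval_def by simp
    have "b n \<in> {a n..b n}" using ab by simp
    then have "f n (b n) = f n (a n) + s n * (b n - a n)" using sn by blast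
    then show "endval a b f (2*n+1) = f n (a n) + s n * (b n - a n)" unfolding endval_def by simp
  qed
  then show ?thesis by (intro exI[of _ "\<lambda>n. f n (a n)"] exI[of _ s])
qed

lemma some_eq:
  assumes "\<forall>i\<in>v. \<forall>j\<in>v. g i = g j" "j \<in> v"
  shows "g j = g (SOME j. j \<in> v)"
  using assms by (metis someI)

lemma boundary_single:
  assumes "v \<in> graph_boundary V" shows "v \<in> V" "\<exists>j. v = {j}"
  using assms unfolding graph_boundary_def by (auto simp: card_1_singleton_iff)

lemma mg_union:
  assumes mg: "is_metric_graph E a b V"
  shows "(\<Sum>j<2*E. g j) = (\<Sum>v\<in>V. \<Sum>j\<in>v. g j)"
proof -
  have U: "{..<2*E} = \<Union>V"
  proof
    show "{..<2*E} \<subseteq> \<Union>V" using mg_ex[OF mg] by (auto simp: subset_eq)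
    show "\<Union>V \<subseteq> {..<2*E}" using mg_sub[OF mg] by (auto simp: subset_eq)
  qed
  have "(\<Sum>j\<in>\<Union>V. g j) = (\<Sum>v\<in>V. \<Sum>j\<in>v. g j)"
  proof (rule sum.Union_disjoint[simplified])
    show "\<forall>A\<in>V. finite A" using mg_vfin[OF mg] by blast
    show "\<forall>A\<in>V. \<forall>Ba\<in>V. A \<noteq> Ba \<longrightarrow> A \<inter> Ba = {}"
    proof (intro ballI impI)
      fix A C assume "A \<in> V" "C \<in> V" "A \<noteq> C"
      then show "A \<inter> C = {}" using mg_uniq[OF mg, of A C] by blast
    qed
  qed
  then show ?thesis unfolding U .
qed

lemma stD_zero:
  assumes mg: "is_metric_graph E a b V" and conn: "connected_graph E V"
    and B: "B \<subseteq> graph_boundary V" "B \<noteq> {}" and f: "f \<in> ker_stD E a b V B"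
  shows "f = (\<lambda>n x. 0)"
proof -
  have fK: "edge_harmonic E a b f \<and> (\<forall>v\<in>B. \<forall>j\<in>v. endval a b f j = 0) \<and>
     (\<forall>v\<in>V - B. (\<forall>i\<in>v. \<forall>j\<in>v. endval a b f i = endval a b f j) \<and> (\<Sum>j\<in>v. endder a b f j) = 0)"
    using f unfolding ker_stD_def by (rule CollectD)
  then have h: "edge_harmonic E a b f" and fB: "\<forall>v\<in>B. \<forall>j\<in>v. endval a b f j = 0"
    and fV: "\<forall>v\<in>V - B. (\<forall>i\<in>v. \<forall>j\<in>v. endval a b f i = endval a b f j) \<and> (\<Sum>j\<in>v. endder a b f j) = 0"
    by blast+
  obtain \<alpha> s where D: "\<forall>n<E. (\<forall>x\<in>{a n..b n}. f n x = \<alpha> n + s n * (x - a n)) \<and>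
      endder a b f (2*n) = s n \<and> endder a b f (2*n+1) = - s n \<and>
      endval a b f (2*n) = \<alpha> n \<and> endval a b f (2*n+1) = \<alpha> n + s n * (b n - a n)"
    using harmonic_data[OF mg h] by (elim exE) blast
  have BV: "B \<subseteq> V" using B(1) boundary_single(1) by blast
  have vsum0: "(\<Sum>j\<in>v. endder a b f j * endval a b f j) = 0" if v: "v \<in> V" for v
  proof (cases "v \<in> B")
    case True then show ?thesis using fB by (intro sum.neutral) simp
  next
    case False
    then have vB: "v \<in> V - B" using v by blast
    have c: "\<forall>i\<in>v. \<forall>j\<in>v. endval a b f i = endval a b f j" using fV vB by blast
    have s0: "(\<Sum>j\<in>v. endder a b f j) = 0" using fV vB by blast
    obtain j0 where j0: "j0 \<in> v" using mg_ne[OF mg v] by blast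
    have "(\<Sum>j\<in>v. endder a b f j * endval a b f j) = (\<Sum>j\<in>v. endder a b f j * endval a b f j0)" using c j0 by (metis (no_types, lifting) sum.cong)
    also have "\<dots> = (\<Sum>j\<in>v. endder a b f j) * endval a b f j0" by (simp add: sum_distrib_right)
    finally show ?thesis using s0 by simp
  qed
  have "(\<Sum>j<2*E. endder a b f j * endval a b f j) = 0"
    unfolding mg_union[OF mg] using vsum0 by (intro sum.neutral) blast
  moreover have "(\<Sum>j<2*E. endder a b f j * endval a b f j) = (\<Sum>n<E. - (s n * s n * (b n - a n)))"
    unfolding sum_pairs
  proof (rule sum.cong)
    fix n assume "n \<in> {..<E}"
    then have e: "endder a b f (2*n) = s n" "endder a b f (2*n+1) = - s n" "endval a b f (2*n) = \<alpha> n"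
      "endval a b f (2*n+1) = \<alpha> n + s n * (b n - a n)" using D by auto
    then show "endder a b f (2*n) * endval a b f (2*n) + endder a b f (2*n+1) * endval a b f (2*n+1) = - (s n * s n * (b n - a n))"
      unfolding e by (simp add: algebra_simps)
  qed simp
  ultimately have "(\<Sum>n<E. s n * s n * (b n - a n)) = 0" by (simp add: sum_negf)
  moreover have "\<forall>n\<in>{..<E}. 0 \<le> s n * s n * (b n - a n)"
    using mg_ab[OF mg] by (simp add: less_imp_le)
  ultimately have "\<forall>n\<in>{..<E}. s n * s n * (b n - a n) = 0"
    using sum_nonneg_eq_0_iff[of "{..<E}" "\<lambda>n. s n * s n * (b n - a n)"] by blast
  then have s0: "\<forall>n<E. s n = 0" using mg_ab[OF mg] by (metis lessThan_iff mult_eq_0_iff order_less_irrefl right_minus_eq)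
  define \<Phi> where "\<Phi> v = endval a b f (SOME j. j \<in> v)" for v
  have evPhi: "endval a b f j = \<Phi> v" if v: "v \<in> V" and j: "j \<in> v" for v j
  proof (cases "v \<in> B")
    case True
    then obtain j1 where "v = {j1}" using B(1) boundary_single(2) by blast
    then show ?thesis using j unfolding \<Phi>_def by simp
  next
    case False
    then show ?thesis unfolding \<Phi>_def using fV v j some_eq[of v "endval a b f" j] by blast
  qed
  obtain v0 where v0: "v0 \<in> B" using B(2) by blast
  then obtain j0 where j0: "v0 = {j0}" using B(1) boundary_single(2) by blast
  have Phi0: "\<Phi> v0 = 0" using fB v0 j0 evPhi[of v0 j0] BV by auto
  have v0V: "v0 \<in> V" using v0 BV by blast
  have edgePhi: "(\<Phi> u = 0) = (\<Phi> w = 0)"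
    if n: "n < E" and uw: "u \<in> V" "w \<in> V" "2*n \<in> u" "2*n+1 \<in> w" for n u w
  proof -
    have "\<Phi> u = endval a b f (2*n)" "\<Phi> w = endval a b f (2*n+1)" using evPhi uw by auto
    moreover have "endval a b f (2*n) = \<alpha> n" "endval a b f (2*n+1) = \<alpha> n" using D s0 n by auto
    ultimately show "(\<Phi> u = 0) = (\<Phi> w = 0)" by simp
  qed
  have allz: "\<forall>v\<in>V. \<Phi> v = 0"
    by (rule propagate[OF conn v0V, of \<Phi>, OF Phi0 edgePhi])
  have a0: "\<alpha> n = 0" if n: "n < E" for n
  proof -
    obtain u where u: "u \<in> V" "2*n \<in> u" using mg_ex[OF mg, of "2*n"] n by auto
    have "endval a b f (2*n) = \<alpha> n" using D n by auto
    then show ?thesis using evPhi[OF u] allz u by simp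
  qed
  show ?thesis
  proof (intro ext)
    fix n x
    show "f n x = 0"
    proof (cases "n < E")
      case True
      show ?thesis
      proof (cases "x \<in> {a n..b n}")
        case xin: True
        have "f n x = \<alpha> n + s n * (x - a n)" using D True xin by blast
        then show ?thesis using a0 s0 True by simp
      next
        case False
        then show ?thesis using h True unfolding edge_harmonic_def by blast
      qed
    next
      case False
      then show ?thesis using h unfolding edge_harmonic_def by simp
    qed
  qed
qed

lemma astN_const:
  assumes mg: "is_metric_graph E a b V" and conn: "connected_graph E V"
    and B: "B \<subseteq> graph_boundary V" "B \<noteq> {}" and f: "f \<in> ker_astN E a b V B"
  shows "\<forall>n<E. \<forall>x\<in>{a n..b n}. f n x = f n (a n)"
proof -
  have fK: "edge_harmonic E a b f \<and> (\<forall>v\<in>B. \<forall>j\<in>v. endder a b f j = 0) \<and>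
     (\<forall>v\<in>V - B. (\<Sum>j\<in>v. endval a b f j) = 0 \<and> (\<forall>i\<in>v. \<forall>j\<in>v. endder a b f i = endder a b f j))"
    using f unfolding ker_astN_def by (rule CollectD)
  then have h: "edge_harmonic E a b f" and fB: "\<forall>v\<in>B. \<forall>j\<in>v. endder a b f j = 0"
    and fV: "\<forall>v\<in>V - B. (\<forall>i\<in>v. \<forall>j\<in>v. endder a b f i = endder a b f j)"
    by blast+
  obtain \<alpha> s where D: "\<forall>n<E. (\<forall>x\<in>{a n..b n}. f n x = \<alpha> n + s n * (x - a n)) \<and>
      endder a b f (2*n) = s n \<and> endder a b f (2*n+1) = - s n \<and>
      endval a b f (2*n) = \<alpha> n \<and> endval a b f (2*n+1) = \<alpha> n + s n * (b n - a n)"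
    using harmonic_data[OF mg h] by (elim exE) blast
  have BV: "B \<subseteq> V" using B(1) boundary_single(1) by blast
  define \<Phi> where "\<Phi> v = endder a b f (SOME j. j \<in> v)" for v
  have edPhi: "endder a b f j = \<Phi> v" if v: "v \<in> V" and j: "j \<in> v" for v j
  proof (cases "v \<in> B")
    case True
    then obtain j1 where "v = {j1}" using B(1) boundary_single(2) by blast
    then show ?thesis using j unfolding \<Phi>_def by simp
  next
    case False
    then have vB: "v \<in> V - B" using v by blast
    then show ?thesis unfolding \<Phi>_def using fV j some_eq[of v "endder a b f" j] by blast
  qed
  obtain v0 where v0: "v0 \<in> B" using B(2) by blast
  then obtain j0 where j0: "v0 = {j0}" using B(1) boundary_single(2) by blast
  have v0V: "v0 \<in> V" using v0 BV by blast
  have Phi0: "\<Phi> v0 = 0" using fB v0 j0 edPhi[OF v0V, of j0] by auto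
  have edgePhi: "(\<Phi> u = 0) = (\<Phi> w = 0)"
    if n: "n < E" and uw: "u \<in> V" "w \<in> V" "2*n \<in> u" "2*n+1 \<in> w" for n u w
  proof -
    have "\<Phi> u = endder a b f (2*n)" "\<Phi> w = endder a b f (2*n+1)" using edPhi uw by auto
    moreover have "endder a b f (2*n) = s n" "endder a b f (2*n+1) = - s n" using D n by auto
    ultimately show "(\<Phi> u = 0) = (\<Phi> w = 0)" by simp
  qed
  have allz: "\<forall>v\<in>V. \<Phi> v = 0"
    by (rule propagate[OF conn v0V, of \<Phi>, OF Phi0 edgePhi])
  have s0: "s n = 0" if n: "n < E" for n
  proof -
    obtain u where u: "u \<in> V" "2*n \<in> u" using mg_ex[OF mg, of "2*n"] n by auto
    have "endder a b f (2*n) = s n" using D n by auto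
    then show ?thesis using edPhi[OF u] allz u by simp
  qed
  show ?thesis
  proof (intro allI impI ballI)
    fix n x assume n: "n < E" and x: "x \<in> {a n..b n}"
    have ab: "a n < b n" using mg_ab[OF mg n] .
    have "a n \<in> {a n..b n}" using ab by simp
    then have "f n (a n) = \<alpha> n + s n * (a n - a n)" using D n by blast
    moreover have "f n x = \<alpha> n + s n * (x - a n)" using D n x by blast
    ultimately show "f n x = f n (a n)" using s0[OF n] by simp
  qed
qed

definition Lmat :: "nat set \<Rightarrow> nat \<Rightarrow> real" where
  "Lmat v i = (if 2*i \<in> v then 1 else 0) + (if 2*i+1 \<in> v then 1 else 0)"

lemma sum_vertex:
  assumes mg: "is_metric_graph E a b V" and v: "v \<in> V"
  shows "(\<Sum>j\<in>v. c (j div 2)) = (\<Sum>i\<in>{..<E}. Lmat v i * c i)"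
proof -
  have sub: "v \<subseteq> {..<2*E}" using mg_sub[OF mg v] .
  have d1: "\<And>n::nat. 2*n div 2 = n" by simp
  have d2: "\<And>n::nat. (2*n+1) div 2 = n" by simp
  have "(\<Sum>j\<in>v. c (j div 2)) = (\<Sum>j\<in>{..<2*E} \<inter> v. c (j div 2))"
    using sub by (simp add: Int_absorb1)
  also have "\<dots> = (\<Sum>j<2*E. if j \<in> v then c (j div 2) else 0)"
    by (rule sum.inter_restrict) simp
  also have "\<dots> = (\<Sum>n<E. (if 2*n \<in> v then c n else 0) + (if 2*n+1 \<in> v then c n else 0))"
    unfolding sum_pairs d1 d2 ..
  also have "\<dots> = (\<Sum>i\<in>{..<E}. Lmat v i * c i)"
    unfolding Lmat_def by (rule sum.cong) (simp_all add: distrib_right)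
  finally show ?thesis .
qed

lemma sum_delta_vertex:
  assumes mg: "is_metric_graph E a b V" and u: "u \<in> V" "j \<in> u"
  shows "(\<Sum>v\<in>V - B. if j \<in> v then \<psi> v else 0) = (if u \<in> B then 0 else (\<psi> u :: real))"
proof -
  have "(\<Sum>v\<in>V - B. if j \<in> v then \<psi> v else 0) = (\<Sum>v\<in>V - B. if v = u then \<psi> v else 0)"
  proof (rule sum.cong)
    fix v assume "v \<in> V - B"
    then have "v \<in> V" by blast
    then have "j \<in> v \<longleftrightarrow> v = u" using mg_uniq[OF mg _ u(1) _ u(2)] u(2) by blast
    then show "(if j \<in> v then \<psi> v else 0) = (if v = u then \<psi> v else 0)" by simp
  qed simp
  also have "\<dots> = (if u \<in> V - B then \<psi> u else 0)"
    using mg_fin[OF mg] by (simp add: sum.delta')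
  finally show ?thesis using u by auto
qed

lemma indep_graph:
  assumes mg: "is_metric_graph E a b V" and conn: "connected_graph E V"
    and B: "B \<subseteq> graph_boundary V" "B \<noteq> {}"
  shows "indepL {..<E} (V - B) Lmat"
  unfolding indepL_def
proof (intro allI impI ballI)
  fix \<psi> :: "nat set \<Rightarrow> real" and p
  assume h: "\<forall>i\<in>{..<E}. (\<Sum>v\<in>V - B. \<psi> v * Lmat v i) = 0" and p: "p \<in> V - B"
  define \<Psi> where "\<Psi> v = (if v \<in> B then 0 else \<psi> v)" for v
  have BV: "B \<subseteq> V" using B(1) boundary_single(1) by blast
  obtain v0 where v0: "v0 \<in> B" using B(2) by blast
  have v0V: "v0 \<in> V" using v0 BV by blast
  have Psi0: "\<Psi> v0 = 0" using v0 unfolding \<Psi>_def by simp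
  have edgePsi: "(\<Psi> u = 0) = (\<Psi> w = 0)"
    if n: "n < E" and uw: "u \<in> V" "w \<in> V" "2*n \<in> u" "2*n+1 \<in> w" for n u w
  proof -
    have "(\<Sum>v\<in>V - B. \<psi> v * Lmat v n) =
       (\<Sum>v\<in>V - B. if 2*n \<in> v then \<psi> v else 0) + (\<Sum>v\<in>V - B. if 2*n+1 \<in> v then \<psi> v else 0)"
      unfolding Lmat_def sum.distrib[symmetric] by (rule sum.cong) (simp_all add: distrib_left)
    also have "\<dots> = \<Psi> u + \<Psi> w"
      unfolding sum_delta_vertex[OF mg uw(1,3)] sum_delta_vertex[OF mg uw(2,4)] \<Psi>_def by simp
    finally have "\<Psi> u + \<Psi> w = 0" using h n by simp
    then show ?thesis by auto
  qed
  have allz: "\<forall>v\<in>V. \<Psi> v = 0"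
    by (rule propagate[OF conn v0V, of \<Psi>, OF Psi0 edgePsi])
  then show "\<psi> p = 0" using p unfolding \<Psi>_def by auto
qed

lemma hasdim_transport:
  assumes "vdim S' d"
    and "\<And>y. y \<in> S' \<Longrightarrow> \<phi> y \<in> S"
    and "\<And>x. x \<in> S \<Longrightarrow> \<exists>y\<in>S'. x = \<phi> y"
    and "\<And>c u. \<phi> (\<lambda>i. \<Sum>k<d. c k * u k i) = (\<lambda>n x. \<Sum>k<d. c k * \<phi> (u k) n x)"
    and "\<And>c u. (\<forall>k<d. u k \<in> S') \<Longrightarrow> (\<lambda>i. \<Sum>k<d. c k * u k i) \<in> S'"
    and "\<And>y. y \<in> S' \<Longrightarrow> \<phi> y = (\<lambda>n x. 0) \<Longrightarrow> y = (\<lambda>i. 0)"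
  shows "has_dim S d"
proof -
  obtain u where u1: "\<forall>k<d. u k \<in> S'"
    and u2: "\<forall>x\<in>S'. \<exists>c. x = (\<lambda>i. \<Sum>k<d. c k * u k i)"
    and u3: "\<forall>c. (\<lambda>i. \<Sum>k<d. c k * u k i) = (\<lambda>i. 0) \<longrightarrow> (\<forall>k<d. c k = 0)"
    using assms(1) unfolding vdim_def by blast
  show ?thesis unfolding has_dim_def
  proof (intro exI[of _ "\<lambda>k. \<phi> (u k)"] conjI allI impI ballI)
    fix k assume "k < d" then show "\<phi> (u k) \<in> S" using u1 assms(2) by blast
  next
    fix x assume "x \<in> S"
    then obtain y where y: "y \<in> S'" "x = \<phi> y" using assms(3) by blast
    then obtain c where "y = (\<lambda>i. \<Sum>k<d. c k * u k i)" using u2 by blast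
    then show "\<exists>c. x = (\<lambda>n xa. \<Sum>k<d. c k * \<phi> (u k) n xa)" using y assms(4) by metis
  next
    fix c k assume h: "(\<lambda>n x. \<Sum>k<d. c k * \<phi> (u k) n x) = (\<lambda>n x. 0)" and k: "k < d"
    have "\<phi> (\<lambda>i. \<Sum>k<d. c k * u k i) = (\<lambda>n x. 0)" using h assms(4) by metis
    then have "(\<lambda>i. \<Sum>k<d. c k * u k i) = (\<lambda>i. 0)" using assms(5,6) u1 by blast
    then show "c k = 0" using u3 k by blast
  qed
qed

definition Emb :: "nat \<Rightarrow> (nat \<Rightarrow> real) \<Rightarrow> (nat \<Rightarrow> real) \<Rightarrow> (nat \<Rightarrow> real) \<Rightarrow> nat \<Rightarrow> real \<Rightarrow> real" where
  "Emb E a b y = (\<lambda>n x. if n < E \<and> x \<in> {a n..b n} then y n else 0)"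

lemma Emb_edge: "n < E \<Longrightarrow> Emb E a b y n = (\<lambda>x. if x \<in> {a n..b n} then y n else 0)"
  unfolding Emb_def by simp

lemma Emb_endder:
  assumes mg: "is_metric_graph E a b V" and j: "j div 2 < E"
  shows "endder a b (Emb E a b y) j = 0"
proof -
  define n where "n = j div 2"
  have n: "n < E" using j unfolding n_def .
  have ab: "a n < b n" using mg_ab[OF mg n] .
  have "vector_derivative (Emb E a b y n) (at x within {a n..b n}) = 0" if x: "x \<in> {a n..b n}" for x
    unfolding Emb_edge[OF n]
    by (rule vector_derivative_within_closed_interval[OF ab x])
       (use const_edge_deriv[OF ab x] in \<open>simp add: has_real_derivative_iff_has_vector_derivative\<close>)
  then show ?thesis unfolding endder_def Let_def n_def[symmetric] using ab by simp
qed

lemma Emb_endval: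
  assumes mg: "is_metric_graph E a b V" and j: "j div 2 < E"
  shows "endval a b (Emb E a b y) j = y (j div 2)"
proof -
  define n where "n = j div 2"
  have n: "n < E" using j unfolding n_def .
  have ab: "a n < b n" using mg_ab[OF mg n] .
  show ?thesis unfolding endval_def n_def[symmetric] Emb_edge[OF n] using ab by simp
qed

lemma Emb_in:
  assumes mg: "is_metric_graph E a b V" and y: "y \<in> Sol {..<E} (V - B) Lmat" and BV: "B \<subseteq> V"
  shows "Emb E a b y \<in> ker_astN E a b V B"
proof -
  let ?F = "Emb E a b y"
  have jE: "j div 2 < E" if "v \<in> V" "j \<in> v" for v j
    using mg_sub[OF mg that(1)] that(2) by auto
  have eh: "edge_harmonic E a b ?F"
    unfolding edge_harmonic_def
  proof (intro conjI allI impI)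
    fix n x assume "E \<le> n" then show "?F n x = 0" unfolding Emb_def by simp
  next
    fix n x assume "n < E" "x \<notin> {a n..b n}" then show "?F n x = 0" unfolding Emb_def by auto
  next
    fix n assume n: "n < E"
    have ab: "a n < b n" using mg_ab[OF mg n] .
    show "\<exists>g'. (\<forall>x\<in>{a n..b n}. (?F n has_real_derivative g' x) (at x within {a n..b n})) \<and>
                 (\<forall>x\<in>{a n..b n}. (g' has_real_derivative 0) (at x within {a n..b n}))"
      unfolding Emb_edge[OF n] using const_edge_deriv[OF ab] by (intro exI[of _ "\<lambda>x. 0"] conjI ballI) auto
  qed
  have c1: "\<forall>v\<in>B. \<forall>j\<in>v. endder a b ?F j = 0"
  proof (intro ballI)
    fix v j assume "v \<in> B" "j \<in> v"
    then have "j div 2 < E" using jE BV by blast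
    then show "endder a b ?F j = 0" by (rule Emb_endder[OF mg])
  qed
  have c2: "(\<Sum>j\<in>v. endval a b ?F j) = 0 \<and> (\<forall>i\<in>v. \<forall>j\<in>v. endder a b ?F i = endder a b ?F j)"
    if v: "v \<in> V - B" for v
  proof
    have vV: "v \<in> V" using v by blast
    have "(\<Sum>j\<in>v. endval a b ?F j) = (\<Sum>j\<in>v. y (j div 2))"
      by (rule sum.cong) (use Emb_endval[OF mg] jE[OF vV] in auto)
    also have "\<dots> = (\<Sum>i\<in>{..<E}. Lmat v i * y i)" by (rule sum_vertex[OF mg vV])
    also have "\<dots> = 0" using y v unfolding Sol_def by blast
    finally show "(\<Sum>j\<in>v. endval a b ?F j) = 0" .
    show "\<forall>i\<in>v. \<forall>j\<in>v. endder a b ?F i = endder a b ?F j"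
      using Emb_endder[OF mg] jE[OF vV] by simp
  qed
  show ?thesis unfolding ker_astN_def using eh c1 c2 by blast
qed

lemma Emb_onto:
  assumes mg: "is_metric_graph E a b V" and conn: "connected_graph E V"
    and B: "B \<subseteq> graph_boundary V" "B \<noteq> {}" and f: "f \<in> ker_astN E a b V B"
  shows "\<exists>y\<in>Sol {..<E} (V - B) Lmat. f = Emb E a b y"
proof -
  have cst: "\<forall>n<E. \<forall>x\<in>{a n..b n}. f n x = f n (a n)" by (rule astN_const[OF mg conn B f])
  have fK: "edge_harmonic E a b f \<and> (\<forall>v\<in>B. \<forall>j\<in>v. endder a b f j = 0) \<and>
     (\<forall>v\<in>V - B. (\<Sum>j\<in>v. endval a b f j) = 0 \<and> (\<forall>i\<in>v. \<forall>j\<in>v. endder a b f i = endder a b f j))"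
    using f unfolding ker_astN_def by (rule CollectD)
  then have h: "edge_harmonic E a b f"
    and fV: "\<forall>v\<in>V - B. (\<Sum>j\<in>v. endval a b f j) = 0" by blast+
  define c where "c n = (if n < E then f n (a n) else 0)" for n
  have jE: "j div 2 < E" if "v \<in> V" "j \<in> v" for v j
    using mg_sub[OF mg that(1)] that(2) by auto
  have evc: "endval a b f j = c (j div 2)" if jn: "j div 2 < E" for j
  proof -
    define n where "n = j div 2"
    have n: "n < E" using jn unfolding n_def .
    have ab: "a n < b n" using mg_ab[OF mg n] .
    have "b n \<in> {a n..b n}" using ab by simp
    then have "f n (b n) = f n (a n)" using cst n by blast
    then show ?thesis unfolding endval_def n_def[symmetric] c_def using n by simp
  qed
  have cSol: "c \<in> Sol {..<E} (V - B) Lmat"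
    unfolding Sol_def
  proof (intro CollectI conjI allI impI ballI)
    fix i assume "i \<notin> {..<E}" then show "c i = 0" unfolding c_def by simp
  next
    fix v assume v: "v \<in> V - B"
    then have vV: "v \<in> V" by blast
    have "(\<Sum>i\<in>{..<E}. Lmat v i * c i) = (\<Sum>j\<in>v. c (j div 2))" by (rule sum_vertex[OF mg vV, symmetric])
    also have "\<dots> = (\<Sum>j\<in>v. endval a b f j)"
      by (rule sum.cong) (use evc jE[OF vV] in auto)
    also have "\<dots> = 0" using fV v by blast
    finally show "(\<Sum>i\<in>{..<E}. Lmat v i * c i) = 0" .
  qed
  have "f = Emb E a b c"
  proof (intro ext)
    fix n x
    show "f n x = Emb E a b c n x"
    proof (cases "n < E")
      case True
      show ?thesis
      proof (cases "x \<in> {a n..b n}")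
        case xin: True
        have e: "f n x = f n (a n)" using cst True xin by blast
        have "Emb E a b c n x = f n (a n)" unfolding Emb_def c_def using True xin by simp
        then show ?thesis using e by simp
      next
        case False
        then show ?thesis using h True unfolding edge_harmonic_def Emb_def by auto
      qed
    next
      case False
      then show ?thesis using h unfolding edge_harmonic_def Emb_def by simp
    qed
  qed
  then show ?thesis using cSol by blast
qed

lemma Emb_lin: "Emb E a b (\<lambda>i. \<Sum>k<d. c k * u k i) = (\<lambda>n x. \<Sum>k<d. c k * Emb E a b (u k) n x)"
  unfolding Emb_def by (intro ext) auto

lemma Emb_inj:
  assumes mg: "is_metric_graph E a b V" and y: "y \<in> Sol {..<E} P L" and z: "Emb E a b y = (\<lambda>n x. 0)"
  shows "y = (\<lambda>i. 0)"
proof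
  fix n show "y n = 0"
  proof (cases "n < E")
    case True
    have ab: "a n < b n" using mg_ab[OF mg True] .
    have "Emb E a b y n (a n) = y n" unfolding Emb_def using True ab by simp
    then show ?thesis using z by (metis)
  next
    case False then show ?thesis using y unfolding Sol_def by simp
  qed
qed

theorem mainTheorem8:
  fixes E :: nat and a b :: "nat \<Rightarrow> real" and V B :: "nat set set"
  assumes "is_metric_graph E a b V"
    and "connected_graph E V"
    and "bipartite_graph E V"
    and "B \<subseteq> graph_boundary V" and "B \<noteq> {}"
  shows "has_dim (ker_stD E a b V B) 0
       \<and> has_dim (ker_astN E a b V B) (nat (betti E V + int (card B) - 1))
       \<and> betti E V + int (card B) - 1 \<ge> 0"
proof -
  note mg = assms(1) and conn = assms(2) and B = assms(4,5)
  have BV: "B \<subseteq> V" using B(1) boundary_single(1) by blast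
  have finV: "finite V" by (rule mg_fin[OF mg])
  have finB: "finite B" using finV BV finite_subset by blast
  have p1: "has_dim (ker_stD E a b V B) 0"
    unfolding has_dim_def using stD_zero[OF mg conn B] by simp
  have LA: "card (V - B) \<le> card {..<E::nat} \<and> vdim (Sol {..<E} (V - B) Lmat) (card {..<E::nat} - card (V - B))"
    by (rule main_LA) (use finV indep_graph[OF mg conn B] in auto)
  have cVB: "card (V - B) = card V - card B" using card_Diff_subset[OF finB BV] .
  have cBV: "card B \<le> card V" using card_mono[OF finV BV] .
  have le: "card V - card B \<le> E" using LA cVB by simp
  have p2: "has_dim (ker_astN E a b V B) (E - card (V - B))"
  proof (rule hasdim_transport[of "Sol {..<E} (V - B) Lmat" _ "Emb E a b"])
    show "vdim (Sol {..<E} (V - B) Lmat) (E - card (V - B))" using LA by simp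
    show "\<And>y. y \<in> Sol {..<E} (V - B) Lmat \<Longrightarrow> Emb E a b y \<in> ker_astN E a b V B"
      by (rule Emb_in[OF mg _ BV])
    show "\<And>x. x \<in> ker_astN E a b V B \<Longrightarrow> \<exists>y\<in>Sol {..<E} (V - B) Lmat. x = Emb E a b y"
      by (rule Emb_onto[OF mg conn B])
    show "\<And>c u. Emb E a b (\<lambda>i. \<Sum>k<E - card (V - B). c k * u k i) =
       (\<lambda>n x. \<Sum>k<E - card (V - B). c k * Emb E a b (u k) n x)" by (rule Emb_lin)
    show "\<And>c u. \<forall>k<E - card (V - B). u k \<in> Sol {..<E} (V - B) Lmat \<Longrightarrow>
       (\<lambda>i. \<Sum>k<E - card (V - B). c k * u k i) \<in> Sol {..<E} (V - B) Lmat" by (rule Sol_comb)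
    show "\<And>y. y \<in> Sol {..<E} (V - B) Lmat \<Longrightarrow> Emb E a b y = (\<lambda>n x. 0) \<Longrightarrow> y = (\<lambda>i. 0)"
      by (rule Emb_inj[OF mg])
  qed
  have num: "nat (betti E V + int (card B) - 1) = E - card (V - B)"
    unfolding betti_def cVB using cBV le by simp
  have nn: "betti E V + int (card B) - 1 \<ge> 0"
    unfolding betti_def using cBV le by simp
  show ?thesis using p1 p2 num nn by simp
qed

end
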